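(* Let $\phi=\phi_{\underline\alpha}$ be a completely positive map in $\mathcal J_1$ given in Kraus form by a family $\underline\alpha=\{\alpha_i\}_{i\in\mathbb N}\subset\mathcal B(\mathcal H)$. Then $\phi$ is positivity improving if and only if for every $0\ne x\in\mathcal H$ the closed linear span of $\{\alpha_i^\star x: i\in\mathbb N\}$ equals $\mathcal H$.
   Context: Let $\mathcal H$ be a complex separable Hilbert space, $\mathcal B(\mathcal H)$ the bounded operators, $\mathbb I$ the identity, and $\mathcal J_1$ the trace-class operators with norm $\|A\|_1=\operatorname{tr}|A|$, $|A|=(A^\star A)^{1/2}$. For self-adjoint $A$, $A\ge 0$ means $\langle x,Ax\rangle\ge 0$ for all $x$, and $A>0$ means $\langle x,Ax\rangle>0$ for all $x\ne0$. $\mathcal C_1=\{A\in\mathcal J_1:A\ge0\}$. A positive map in $\mathcal J_1$ is a linear map $\phi:\mathcal J_1\to\mathcal J_1$ with $\phi(\mathcal C_1)\subseteq\mathcal C_1$; it is $n$-positive if $\phi\otimes\mathrm{id}_{M_n}$ maps positive elements of $\mathcal J_1(\mathcal H\otimes\mathbb C^n)$ (i.e. positive $n\times n$ operator matrices with entries in $\mathcal J_1$) to positive elements, and completely positive if it is $n$-positive for all $n$. Kraus form: given $\underline\alpha=\{\alpha_i\}_{i\in\mathbb N}\subset\mathcal B(\mathcal H)$ with $\sum_{i\in K}\alpha_i^\star\alpha_i\le c\,\mathbb I$ for some constant $c$ and all finite $K\subset\mathbb N$, $\phi_{\underline\alpha}(A)=\sum_i\alpha_iA\alpha_i^\star$,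 defined as the limit of the finite partial sums; every completely positive map on $\mathcal J_1$ has such a representation. A positive map $\phi$ is positivity improving if $\phi(A)>0$ for every $A\in\mathcal C_1$, $A\ne0$. *)

theory Defs
  imports "HOL-Analysis.Analysis"
begin

class complex_vector_sp = real_vector +
  fixes scaleC :: "complex \<Rightarrow> 'a \<Rightarrow> 'a"
  assumes scaleC_add_right: "scaleC a (x + y) = scaleC a x + scaleC a y"
    and scaleC_add_left: "scaleC (a + b) x = scaleC a x + scaleC b x"
    and scaleC_scaleC: "scaleC a (scaleC b x) = scaleC (a * b) x"
    and scaleC_one: "scaleC 1 x = x"
    and scaleR_scaleC: "scaleR r x = scaleC (complex_of_real r) x"

class complex_inner = complex_vector_sp + real_normed_vector +
  fixes cinner :: "'a \<Rightarrow> 'a \<Rightarrow> complex"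
  assumes cinner_commute: "cinner x y = cnj (cinner y x)"
    and cinner_add_left: "cinner (x + y) z = cinner x z + cinner y z"
    and cinner_scaleC_left: "cinner (scaleC r x) y = cnj r * cinner x y"
    and cinner_ge_zero: "0 \<le> Re (cinner x x) \<and> Im (cinner x x) = 0"
    and cinner_eq_zero_iff: "cinner x x = 0 \<longleftrightarrow> x = 0"
    and norm_eq_sqrt_cinner: "norm x = sqrt (Re (cinner x x))"

class chilbert_space = complex_inner + complete_space

definition separable_space :: "'a::topological_space itself \<Rightarrow> bool" where
  "separable_space _ \<longleftrightarrow> (\<exists>D::'a set. countable D \<and> closure D = UNIV)"

definition bounded_op :: "('a::complex_inner \<Rightarrow> 'a) \<Rightarrow> bool" where
  "bounded_op f \<longleftrightarrow> (\<forall>x y. f (x + y) = f x + f y) \<and> (\<forall>c x. f (scaleC c x) = scaleC c (f x))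
     \<and> (\<exists>K. \<forall>x. norm (f x) \<le> norm x * K)"

definition adjoint :: "('a::complex_inner \<Rightarrow> 'a) \<Rightarrow> ('a \<Rightarrow> 'a)" where
  "adjoint f = (THE g. \<forall>x y. cinner (f x) y = cinner x (g y))"

definition op_nonneg :: "('a::complex_inner \<Rightarrow> 'a) \<Rightarrow> bool" where
  "op_nonneg A \<longleftrightarrow> (\<forall>x. 0 \<le> Re (cinner x (A x)) \<and> Im (cinner x (A x)) = 0)"

definition op_pos :: "('a::complex_inner \<Rightarrow> 'a) \<Rightarrow> bool" where
  "op_pos A \<longleftrightarrow> (\<forall>x. x \<noteq> 0 \<longrightarrow> 0 < Re (cinner x (A x)) \<and> Im (cinner x (A x)) = 0)"

definition orthonormal :: "'a::complex_inner set \<Rightarrow> bool" where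
  "orthonormal E \<longleftrightarrow> (\<forall>e\<in>E. cinner e e = 1) \<and> (\<forall>e\<in>E. \<forall>f\<in>E. e \<noteq> f \<longrightarrow> cinner e f = 0)"

(* For positive A one has
  |A| = A, so tr |A| = \<Sum>_e \<langle>e, A e\<rangle> (basis independent); finiteness over every
  orthonormal set is equivalent to finiteness over an orthonormal basis. *)
definition pos_trace_class :: "('a::complex_inner \<Rightarrow> 'a) \<Rightarrow> bool" where
  "pos_trace_class A \<longleftrightarrow> bounded_op A \<and> op_nonneg A \<and>
     (\<forall>E. orthonormal E \<longrightarrow> (\<lambda>e. Re (cinner e (A e))) summable_on E)"

definition kraus_family :: "(nat \<Rightarrow> 'a::complex_inner \<Rightarrow> 'a) \<Rightarrow> bool" where
  "kraus_family \<alpha> \<longleftrightarrow> (\<forall>i. bounded_op (\<alpha> i)) \<and>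
     (\<exists>c. \<forall>K x. finite K \<longrightarrow>
        Re (cinner x (\<Sum>i\<in>K. adjoint (\<alpha> i) (\<alpha> i x))) \<le> c * Re (cinner x x))"

(* Since the series converges in trace norm, the
  pointwise limit agrees with the trace-norm limit. *)
definition kraus_map :: "(nat \<Rightarrow> 'a::complex_inner \<Rightarrow> 'a) \<Rightarrow> ('a \<Rightarrow> 'a) \<Rightarrow> ('a \<Rightarrow> 'a)" where
  "kraus_map \<alpha> A = (\<lambda>x. \<Sum>\<^sub>\<infinity>i\<in>UNIV. \<alpha> i (A (adjoint (\<alpha> i) x)))"

definition positivity_improving :: "(('a::complex_inner \<Rightarrow> 'a) \<Rightarrow> ('a \<Rightarrow> 'a)) \<Rightarrow> bool" where
  "positivity_improving \<phi> \<longleftrightarrow> (\<forall>A. pos_trace_class A \<and> A \<noteq> (\<lambda>_. 0) \<longrightarrow> op_pos (\<phi> A))"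

abbreviation cspan :: "'a::complex_vector_sp set \<Rightarrow> 'a set" where
  "cspan \<equiv> module.span scaleC"

end

theory Submission
  imports Defs
begin

interpretation cm: module "scaleC :: complex \<Rightarrow> 'a::complex_vector_sp \<Rightarrow> 'a"
  by standard (auto simp: scaleC_add_right scaleC_add_left scaleC_scaleC scaleC_one)

lemma cinner_add_right: "cinner x (y + z) = cinner x y + cinner x z"
proof -
  have "cinner x (y + z) = cnj (cinner (y + z) x)" by (rule cinner_commute)
  also have "\<dots> = cnj (cinner y x) + cnj (cinner z x)" by (simp add: cinner_add_left)
  finally show ?thesis by (simp add: cinner_commute[of x y] cinner_commute[of x z])
qed

lemma cinner_scaleC_right: "cinner x (scaleC r y) = r * cinner x y"
proof -
  have "cinner x (scaleC r y) = cnj (cinner (scaleC r y) x)" by (rule cinner_commute)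
  also have "\<dots> = r * cnj (cinner y x)" by (simp add: cinner_scaleC_left)
  finally show ?thesis by (simp add: cinner_commute[of x y])
qed

lemma cinner_zero_left[simp]: "cinner 0 x = 0"
proof -
  have "cinner (0 + 0) x = cinner 0 x + cinner 0 x" by (rule cinner_add_left)
  then show ?thesis by simp
qed

lemma cinner_zero_right[simp]: "cinner x 0 = 0"
proof -
  have "cinner x (0 + 0) = cinner x 0 + cinner x 0" by (rule cinner_add_right)
  then show ?thesis by simp
qed

lemma cinner_minus_left: "cinner (- x) y = - cinner x y"
proof -
  have "cinner (- x + x) y = cinner (- x) y + cinner x y" by (rule cinner_add_left)
  then show ?thesis by (simp add: eq_neg_iff_add_eq_0)
qed

lemma cinner_minus_right: "cinner x (- y) = - cinner x y"
proof -
  have "cinner x (- y + y) = cinner x (- y) + cinner x y" by (rule cinner_add_right)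
  then show ?thesis by (simp add: eq_neg_iff_add_eq_0)
qed

lemma cinner_diff_left: "cinner (x - y) z = cinner x z - cinner y z"
  unfolding diff_conv_add_uminus[of x y] cinner_add_left cinner_minus_left by simp

lemma cinner_diff_right: "cinner x (y - z) = cinner x y - cinner x z"
  unfolding diff_conv_add_uminus[of y z] cinner_add_right cinner_minus_right by simp

lemma cinner_sum_right: "cinner x (sum f A) = (\<Sum>a\<in>A. cinner x (f a))"
  by (induct A rule: infinite_finite_induct) (auto simp: cinner_add_right)

lemma cinner_sum_left: "cinner (sum f A) x = (\<Sum>a\<in>A. cinner (f a) x)"
  by (induct A rule: infinite_finite_induct) (auto simp: cinner_add_left)

lemma cinner_self: "cinner x x = complex_of_real ((norm x)\<^sup>2)"
proof -
  have "Im (cinner x x) = 0" "Re (cinner x x) \<ge> 0" using cinner_ge_zero by auto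
  then show ?thesis using norm_eq_sqrt_cinner[of x]
    by (simp add: complex_eq_iff)
qed

lemma cinner_self_Re: "Re (cinner x x) = (norm x)\<^sup>2"
  by (simp add: cinner_self)

lemma scaleC_real: "scaleR r x = scaleC (complex_of_real r) x"
  by (rule scaleR_scaleC)

lemma cnj_mult_self: "cnj a * a = complex_of_real ((cmod a)\<^sup>2)"
  by (metis complex_norm_square mult.commute of_real_power)

lemma cnj_mult_self': "cnj a * a = (complex_of_real (cmod a))\<^sup>2"
  unfolding cnj_mult_self of_real_power ..

lemma mult_cnj_self': "a * cnj a = (complex_of_real (cmod a))\<^sup>2"
  by (subst mult.commute) (rule cnj_mult_self')

lemma norm_scaleC: "norm (scaleC c (x::'a::complex_inner)) = cmod c * norm x"
proof -
  have "cinner (scaleC c x) (scaleC c x) = (cnj c * c) * cinner x x"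
    by (simp add: cinner_scaleC_left cinner_scaleC_right mult.assoc)
  then have "complex_of_real ((norm (scaleC c x))\<^sup>2) = complex_of_real ((cmod c)\<^sup>2 * (norm x)\<^sup>2)"
    by (simp only: cinner_self cnj_mult_self of_real_mult)
  then have "(norm (scaleC c x))\<^sup>2 = (cmod c * norm x)\<^sup>2"
    by (simp only: of_real_eq_iff power_mult_distrib)
  then show ?thesis by (simp add: power2_eq_iff_nonneg)
qed

lemma cauchy_schwarz: "cmod (cinner x y) \<le> norm x * norm y"
proof (cases "y = 0")
  case True then show ?thesis by simp
next
  case False
  then have ny: "norm y > 0" by simp
  define a where "a = cinner x y"
  define N where "N = (norm y)\<^sup>2"
  have N0: "N > 0" using ny by (simp add: N_def)
  have yx: "cinner y x = cnj a" by (simp add: a_def cinner_commute[of y x])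
  have yy: "cinner y y = complex_of_real N" by (simp add: N_def cinner_self)
  define t where "t = cnj a / complex_of_real N"
  have e: "cinner (x - scaleC t y) (x - scaleC t y)
     = cinner x x - t * a - cnj t * cnj a + cnj t * t * complex_of_real N"
    by (simp add: cinner_diff_left cinner_diff_right cinner_scaleC_left cinner_scaleC_right yx yy a_def algebra_simps)
  have t1: "t * a = complex_of_real ((cmod a)\<^sup>2 / N)"
    by (simp add: t_def cnj_mult_self)
  have t2: "cnj t * cnj a = complex_of_real ((cmod a)\<^sup>2 / N)"
    by (simp add: t_def cnj_mult_self[of "cnj a", simplified] mult.commute)
  have t3: "cnj t * t * complex_of_real N = complex_of_real ((cmod a)\<^sup>2 / N)"
  proof -
    have "cnj t * t * complex_of_real N = (cnj a * a) / complex_of_real N"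
      using N0 by (simp add: t_def power2_eq_square)
    then show ?thesis by (simp add: cnj_mult_self)
  qed
  have "0 \<le> Re (cinner (x - scaleC t y) (x - scaleC t y))"
    using cinner_ge_zero by blast
  also have "\<dots> = (norm x)\<^sup>2 - (cmod a)\<^sup>2 / N"
    unfolding e t1 t2 t3 by (simp add: cinner_self)
  finally have "(cmod a)\<^sup>2 / N \<le> (norm x)\<^sup>2" by simp
  then have "(cmod a)\<^sup>2 \<le> (norm x)\<^sup>2 * N"
    using N0 by (simp add: pos_divide_le_eq)
  then have "(cmod a)\<^sup>2 \<le> (norm x * norm y)\<^sup>2"
    by (simp add: N_def power_mult_distrib)
  then show ?thesis
    unfolding a_def by (rule power2_le_imp_le) simp
qed


lemma bounded_linear_cinner_right: "bounded_linear (cinner x)"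
proof (rule bounded_linear_intro[where K="norm x"])
  show "cinner x (y + z) = cinner x y + cinner x z" for y z by (rule cinner_add_right)
  show "cinner x (r *\<^sub>R y) = r *\<^sub>R cinner x y" for r y
    by (simp add: scaleC_real cinner_scaleC_right scaleR_conv_of_real)
  show "norm (cinner x y) \<le> norm y * norm x" for y
    using cauchy_schwarz[of x y] by (simp add: mult.commute)
qed

lemma bounded_linear_cinner_left: "bounded_linear (\<lambda>y. cinner y x)"
proof (rule bounded_linear_intro[where K="norm x"])
  show "cinner (y + z) x = cinner y x + cinner z x" for y z by (rule cinner_add_left)
  show "cinner (r *\<^sub>R y) x = r *\<^sub>R cinner y x" for r y
    by (simp add: scaleC_real cinner_scaleC_left scaleR_conv_of_real)
  show "norm (cinner y x) \<le> norm y * norm x" for y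
    using cauchy_schwarz[of y x] by simp
qed

lemma bop_add: "bounded_op f \<Longrightarrow> f (x + y) = f x + f y"
  by (simp add: bounded_op_def)

lemma bop_scaleC: "bounded_op f \<Longrightarrow> f (scaleC c x) = scaleC c (f x)"
  by (simp add: bounded_op_def)

lemma bop_bounded_linear: "bounded_op f \<Longrightarrow> bounded_linear f"
proof -
  assume b: "bounded_op f"
  then obtain K where K: "\<And>x. norm (f x) \<le> norm x * K" by (auto simp: bounded_op_def)
  show ?thesis
  proof (rule bounded_linear_intro[where K=K])
    show "f (x + y) = f x + f y" for x y using b by (rule bop_add)
    show "f (r *\<^sub>R x) = r *\<^sub>R f x" for r x using b by (simp add: scaleC_real bop_scaleC)
  qed (rule K)
qed

lemma bop_zero: "bounded_op f \<Longrightarrow> f 0 = 0"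
  using bop_add[of f 0 0] by simp

lemma bop_diff: "bounded_op f \<Longrightarrow> f (x - y) = f x - f y"
  using bop_add[of f "x - y" y] by (simp add: eq_diff_eq)

lemma bop_sum: "bounded_op f \<Longrightarrow> f (sum g A) = (\<Sum>a\<in>A. f (g a))"
  by (induct A rule: infinite_finite_induct) (auto simp: bop_zero bop_add)

lemma scaleC_zero_left[simp]: "scaleC 0 x = 0"
  by (rule cm.scale_zero_left)

lemma scaleC_zero_right[simp]: "scaleC a 0 = 0"
  by (rule cm.scale_zero_right)

lemma scaleC_sum_left: "scaleC (sum f A) x = (\<Sum>a\<in>A. scaleC (f a) x)"
  by (rule cm.scale_sum_left)

lemma scaleC_sum_right: "scaleC a (sum f A) = (\<Sum>x\<in>A. scaleC a (f x))"
  by (rule cm.scale_sum_right)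

lemma scaleC_diff_right: "scaleC a (x - y) = scaleC a x - scaleC a y"
  by (rule cm.scale_right_diff_distrib)

lemma real_quad_lemma:
  fixes X Y A :: real
  assumes "X \<ge> 0" "Y \<ge> 0" "A \<ge> 0" and q: "\<And>r. 0 \<le> X - 2 * r * A + r\<^sup>2 * A * Y"
  shows "A \<le> X * Y"
proof (cases "Y = 0")
  case True
  show ?thesis
  proof (rule ccontr)
    assume "\<not> ?thesis"
    then have "A > 0" using True by simp
    have "0 \<le> X - 2 * ((X + 1) / (2 * A)) * A" using q[of "(X + 1) / (2 * A)"] True by simp
    also have "\<dots> = -1" using \<open>A > 0\<close> by (simp add: field_simps)
    finally show False by simp
  qed
next
  case False
  then have Y: "Y > 0" using assms by simp
  have "0 \<le> X - 2 * (1 / Y) * A + (1 / Y)\<^sup>2 * A * Y" by (rule q)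
  also have "\<dots> = X - A / Y" using Y by (simp add: field_simps power2_eq_square)
  finally show ?thesis using Y by (simp add: field_simps)
qed

locale semi_inner =
  fixes s :: "'a::complex_vector_sp \<Rightarrow> 'a \<Rightarrow> complex"
  assumes s_add_right: "s x (y + z) = s x y + s x z"
    and s_scale_right: "s x (scaleC c y) = c * s x y"
    and s_herm: "s x y = cnj (s y x)"
    and s_nonneg: "0 \<le> Re (s x x) \<and> Im (s x x) = 0"
begin

lemma s_add_left: "s (x + y) z = s x z + s y z"
proof -
  have "s (x + y) z = cnj (s z (x + y))" by (rule s_herm)
  also have "\<dots> = cnj (s z x) + cnj (s z y)" by (simp add: s_add_right)
  finally show ?thesis by (simp add: s_herm[of z x] s_herm[of z y])
qed

lemma s_scale_left: "s (scaleC c x) y = cnj c * s x y"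
proof -
  have "s (scaleC c x) y = cnj (s y (scaleC c x))" by (rule s_herm)
  also have "\<dots> = cnj c * cnj (s y x)" by (simp add: s_scale_right)
  finally show ?thesis by (simp add: s_herm[of y x])
qed

lemma s_zero_left[simp]: "s 0 x = 0"
proof -
  have "s (0 + 0) x = s 0 x + s 0 x" by (rule s_add_left)
  then show ?thesis by simp
qed

lemma s_zero_right[simp]: "s x 0 = 0"
proof -
  have "s x (0 + 0) = s x 0 + s x 0" by (rule s_add_right)
  then show ?thesis by simp
qed

lemma s_minus_left: "s (- x) y = - s x y"
proof -
  have "s (- x + x) y = s (- x) y + s x y" by (rule s_add_left)
  then show ?thesis by (simp add: eq_neg_iff_add_eq_0)
qed

lemma s_minus_right: "s x (- y) = - s x y"
proof -
  have "s x (- y + y) = s x (- y) + s x y" by (rule s_add_right)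
  then show ?thesis by (simp add: eq_neg_iff_add_eq_0)
qed

lemma s_diff_left: "s (x - y) z = s x z - s y z"
  unfolding diff_conv_add_uminus[of x y] s_add_left s_minus_left by simp

lemma s_diff_right: "s x (y - z) = s x y - s x z"
  unfolding diff_conv_add_uminus[of y z] s_add_right s_minus_right by simp

lemma s_sum_right: "s x (sum f A) = (\<Sum>a\<in>A. s x (f a))"
  by (induct A rule: infinite_finite_induct) (auto simp: s_add_right)

lemma s_sum_left: "s (sum f A) x = (\<Sum>a\<in>A. s (f a) x)"
  by (induct A rule: infinite_finite_induct) (auto simp: s_add_left)

lemma s_self: "s x x = complex_of_real (Re (s x x))"
  using s_nonneg[of x] by (simp add: complex_eq_iff)

lemma s_CS: "(cmod (s x y))\<^sup>2 \<le> Re (s x x) * Re (s y y)"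
proof -
  define a where "a = s x y"
  have ya: "s y x = cnj a" by (simp add: a_def s_herm[of y x])
  have q: "0 \<le> Re (s x x) - 2 * r * (cmod a)\<^sup>2 + r\<^sup>2 * (cmod a)\<^sup>2 * Re (s y y)" for r :: real
  proof -
    define t where "t = complex_of_real r * cnj a"
    have "0 \<le> Re (s (x - scaleC t y) (x - scaleC t y))" using s_nonneg by blast
    also have "s (x - scaleC t y) (x - scaleC t y) = s x x - t * a - cnj t * cnj a + cnj t * t * s y y"
      by (simp add: s_diff_left s_diff_right s_scale_left s_scale_right ya a_def algebra_simps)
    also have "t * a = complex_of_real (r * (cmod a)\<^sup>2)"
    proof -
      have "t * a = complex_of_real r * (cnj a * a)" by (simp add: t_def mult.assoc)
      then show ?thesis by (simp only: cnj_mult_self of_real_mult)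
    qed
    also have "cnj t * cnj a = complex_of_real (r * (cmod a)\<^sup>2)"
    proof -
      have "cnj t * cnj a = complex_of_real r * (cnj a * a)" by (simp add: t_def mult.commute)
      then show ?thesis by (simp only: cnj_mult_self of_real_mult)
    qed
    also have "cnj t * t * s y y = complex_of_real (r\<^sup>2 * (cmod a)\<^sup>2 * Re (s y y))"
    proof -
      have "cnj t * t = complex_of_real (r\<^sup>2) * (cnj a * a)"
        by (simp add: t_def power2_eq_square algebra_simps)
      then have "cnj t * t = complex_of_real (r\<^sup>2 * (cmod a)\<^sup>2)"
        by (simp only: cnj_mult_self of_real_mult)
      then show ?thesis by (subst s_self) (simp add: algebra_simps)
    qed
    finally show ?thesis by (simp add: algebra_simps)
  qed
  show ?thesis unfolding a_def[symmetric]
  proof (rule real_quad_lemma)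
    show "0 \<le> Re (s x x)" using s_nonneg by blast
    show "0 \<le> Re (s y y)" using s_nonneg by blast
  qed (auto intro: q)
qed

lemma s_null: "Re (s x x) = 0 \<Longrightarrow> s x y = 0"
  using s_CS[of x y] by simp

lemma s_null': "Re (s x x) = 0 \<Longrightarrow> s y x = 0"
  using s_null[of x y] s_herm[of y x] by simp

lemma s_parallelogram: "Re (s (x + y) (x + y)) \<le> 2 * Re (s x x) + 2 * Re (s y y)"
proof -
  have E: "s (x + y) (x + y) + s (x - y) (x - y) = 2 * s x x + 2 * s y y"
    by (simp add: s_add_left s_add_right s_diff_left s_diff_right)
  have "Re (s (x + y) (x + y)) + Re (s (x - y) (x - y)) = 2 * Re (s x x) + 2 * Re (s y y)"
    using arg_cong[OF E, of Re] by simp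
  moreover have "0 \<le> Re (s (x - y) (x - y))" using s_nonneg by blast
  ultimately show ?thesis by linarith
qed

end


function gs :: "('a::complex_vector_sp \<Rightarrow> 'a \<Rightarrow> complex) \<Rightarrow> (nat \<Rightarrow> 'a) \<Rightarrow> nat \<Rightarrow> 'a" where
  "gs s d n = (let r = d n - (\<Sum>k<n. scaleC (s (gs s d k) (d n)) (gs s d k)) in
     if 0 < Re (s r r) then scaleC (complex_of_real (1 / sqrt (Re (s r r)))) r else 0)"
  by pat_completeness auto
termination by (relation "Wellfounded.measure (\<lambda>(s,d,n). n)") auto

declare gs.simps[simp del]

context semi_inner
begin

lemma s_comb_left: "s (\<Sum>k\<in>K. scaleC (c k) (h k)) v = (\<Sum>k\<in>K. cnj (c k) * s (h k) v)"
  by (simp add: s_sum_left s_scale_left)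

lemma s_comb_right: "s v (\<Sum>k\<in>K. scaleC (c k) (h k)) = (\<Sum>k\<in>K. c k * s v (h k))"
  by (simp add: s_sum_right s_scale_right)

lemma s_h_comb:
  assumes "finite K" "j \<in> K" and orth: "\<And>j k. j \<in> K \<Longrightarrow> k \<in> K \<Longrightarrow> j \<noteq> k \<Longrightarrow> s (h j) (h k) = 0"
  shows "s (h j) (\<Sum>k\<in>K. scaleC (c k) (h k)) = c j * s (h j) (h j)"
proof -
  have "s (h j) (\<Sum>k\<in>K. scaleC (c k) (h k)) = (\<Sum>k\<in>K. c k * s (h j) (h k))"
    by (rule s_comb_right)
  also have "\<dots> = c j * s (h j) (h j) + (\<Sum>k\<in>K - {j}. c k * s (h j) (h k))"
    using assms by (simp add: sum.remove)
  also have "(\<Sum>k\<in>K - {j}. c k * s (h j) (h k)) = 0"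
    using assms by (intro sum.neutral) auto
  finally show ?thesis by simp
qed

lemma s_comb_comb:
  assumes "finite K" and orth: "\<And>j k. j \<in> K \<Longrightarrow> k \<in> K \<Longrightarrow> j \<noteq> k \<Longrightarrow> s (h j) (h k) = 0"
  shows "s (\<Sum>k\<in>K. scaleC (c k) (h k)) (\<Sum>k\<in>K. scaleC (c k) (h k))
       = (\<Sum>k\<in>K. cnj (c k) * c k * s (h k) (h k))"
proof -
  have "s (\<Sum>k\<in>K. scaleC (c k) (h k)) (\<Sum>k\<in>K. scaleC (c k) (h k))
      = (\<Sum>j\<in>K. cnj (c j) * s (h j) (\<Sum>k\<in>K. scaleC (c k) (h k)))"
    by (rule s_comb_left)
  also have "\<dots> = (\<Sum>j\<in>K. cnj (c j) * (c j * s (h j) (h j)))"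
    using assms by (intro sum.cong refl) (simp add: s_h_comb)
  finally show ?thesis by (simp add: mult.assoc)
qed

lemma bessel_eq:
  assumes "finite K" and orth: "\<And>j k. j \<in> K \<Longrightarrow> k \<in> K \<Longrightarrow> j \<noteq> k \<Longrightarrow> s (h j) (h k) = 0"
    and nrm: "\<And>k. k \<in> K \<Longrightarrow> s (h k) (h k) = 1 \<or> h k = 0"
  shows "Re (s (v - (\<Sum>k\<in>K. scaleC (s (h k) v) (h k))) (v - (\<Sum>k\<in>K. scaleC (s (h k) v) (h k))))
       = Re (s v v) - (\<Sum>k\<in>K. (cmod (s (h k) v))\<^sup>2)"
proof -
  define P where "P = (\<Sum>k\<in>K. scaleC (s (h k) v) (h k))"
  define Q where "Q = (\<Sum>k\<in>K. complex_of_real ((cmod (s (h k) v))\<^sup>2))"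
  have vP: "s v P = Q" unfolding P_def Q_def s_comb_right
    by (intro sum.cong refl) (simp add: s_herm[of v] mult_cnj_self')
  have Pv: "s P v = Q" unfolding P_def Q_def s_comb_left
    by (intro sum.cong refl) (simp add: cnj_mult_self')
  have PP: "s P P = Q" unfolding P_def Q_def
  proof (subst s_comb_comb[OF assms(1)])
    show "\<And>j k. j \<in> K \<Longrightarrow> k \<in> K \<Longrightarrow> j \<noteq> k \<Longrightarrow> s (h j) (h k) = 0" by (rule orth)
    show "(\<Sum>k\<in>K. cnj (s (h k) v) * s (h k) v * s (h k) (h k)) =
          (\<Sum>k\<in>K. complex_of_real ((cmod (s (h k) v))\<^sup>2))"
    proof (intro sum.cong refl)
      fix k assume "k \<in> K"
      then consider "s (h k) (h k) = 1" | "h k = 0" using nrm by blast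
      then show "cnj (s (h k) v) * s (h k) v * s (h k) (h k) = complex_of_real ((cmod (s (h k) v))\<^sup>2)"
        by cases (simp_all add: cnj_mult_self')
    qed
  qed
  have "s (v - P) (v - P) = s v v - s v P - s P v + s P P"
    by (simp add: s_diff_left s_diff_right)
  also have "\<dots> = s v v - Q" by (simp add: vP Pv PP)
  finally have "Re (s (v - P) (v - P)) = Re (s v v) - Re Q" by simp
  moreover have "Re Q = (\<Sum>k\<in>K. (cmod (s (h k) v))\<^sup>2)" unfolding Q_def by (simp add: Re_sum)
  ultimately show ?thesis unfolding P_def by simp
qed

lemma bessel_le:
  assumes "finite K" and orth: "\<And>j k. j \<in> K \<Longrightarrow> k \<in> K \<Longrightarrow> j \<noteq> k \<Longrightarrow> s (h j) (h k) = 0"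
    and nrm: "\<And>k. k \<in> K \<Longrightarrow> s (h k) (h k) = 1 \<or> h k = 0"
  shows "(\<Sum>k\<in>K. (cmod (s (h k) v))\<^sup>2) \<le> Re (s v v)"
  using bessel_eq[of K h v, OF assms(1) orth nrm] s_nonneg[where x="v - (\<Sum>k\<in>K. scaleC (s (h k) v) (h k))"] by linarith

end


context semi_inner
begin

context
  fixes d :: "nat \<Rightarrow> 'a"
begin

abbreviation "hh \<equiv> gs s d"
abbreviation "res n \<equiv> d n - (\<Sum>k<n. scaleC (s (hh k) (d n)) (hh k))"

lemma gs_unfold: "hh n = (if 0 < Re (s (res n) (res n))
    then scaleC (complex_of_real (1 / sqrt (Re (s (res n) (res n))))) (res n) else 0)"
  by (simp only: gs.simps[of s d n] Let_def)

lemma gs_norm: "s (hh n) (hh n) = 1 \<or> hh n = 0"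
proof (cases "0 < Re (s (res n) (res n))")
  case True
  define \<sigma> where "\<sigma> = Re (s (res n) (res n))"
  define c where "c = complex_of_real (1 / sqrt \<sigma>)"
  have hn: "hh n = scaleC c (res n)" using True by (subst gs_unfold) (simp add: c_def \<sigma>_def)
  have "s (hh n) (hh n) = cnj c * c * s (res n) (res n)"
    unfolding hn by (simp add: s_scale_left s_scale_right mult.assoc)
  also have "s (res n) (res n) = complex_of_real \<sigma>" unfolding \<sigma>_def by (rule s_self)
  also have "cnj c * c * complex_of_real \<sigma> = 1"
    using True \<sigma>_def by (simp add: c_def flip: of_real_mult; simp add: field_simps)
  finally show ?thesis by simp
next
  case False
  then show ?thesis by (subst (2) gs_unfold) simp
qed

lemma gs_coef: "s (hh n) (d n) = s (hh n) (res n)" if orth: "\<And>k. k < n \<Longrightarrow> s (hh n) (hh k) = 0"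
proof -
  have "s (hh n) (res n) = s (hh n) (d n) - (\<Sum>k<n. s (d n) (hh k) * 0) "
    by (simp add: s_diff_right s_comb_right orth)
  then show ?thesis by simp
qed

lemma gs_orth_lt: "j < n \<Longrightarrow> s (hh j) (hh n) = 0"
proof (induction n arbitrary: j rule: less_induct)
  case (less n)
  have orth: "s (hh a) (hh b) = 0" if "a < n" "b < n" "a \<noteq> b" for a b
  proof (cases "a < b")
    case True then show ?thesis using less.IH that by blast
  next
    case False
    then have "b < a" using that by simp
    then have "s (hh b) (hh a) = 0" using less.IH that by blast
    then show ?thesis by (subst s_herm) simp
  qed
  have "s (hh j) (res n) = 0"
  proof -
    have "s (hh j) (res n) = s (hh j) (d n) - (\<Sum>k<n. s (hh k) (d n) * s (hh j) (hh k))"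
      by (simp add: s_diff_right s_comb_right)
    also have "(\<Sum>k<n. s (hh k) (d n) * s (hh j) (hh k)) = s (hh j) (d n) * s (hh j) (hh j)"
      using s_h_comb[of "{..<n}" j hh "\<lambda>k. s (hh k) (d n)"] less.prems orth
      by (simp add: s_comb_right)
    finally have e: "s (hh j) (res n) = s (hh j) (d n) - s (hh j) (d n) * s (hh j) (hh j)" .
    from gs_norm[of j] show ?thesis
    proof
      assume "s (hh j) (hh j) = 1" then show ?thesis using e by simp
    next
      assume "hh j = 0" then show ?thesis by simp
    qed
  qed
  then show ?case
    by (subst gs_unfold) (simp add: s_scale_right)
qed

lemma gs_orth: "j \<noteq> k \<Longrightarrow> s (hh j) (hh k) = 0"
proof (cases "j < k")
  case True then show ?thesis by (rule gs_orth_lt)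
next
  case False
  assume "j \<noteq> k"
  with False have "k < j" by simp
  then have "s (hh k) (hh j) = 0" by (rule gs_orth_lt)
  then show ?thesis by (subst s_herm) simp
qed

lemma gs_residual:
  "Re (s (d n - (\<Sum>k\<in>{..n}. scaleC (s (hh k) (d n)) (hh k)))
          (d n - (\<Sum>k\<in>{..n}. scaleC (s (hh k) (d n)) (hh k)))) = 0"
proof -
  have split: "d n - (\<Sum>k\<in>{..n}. scaleC (s (hh k) (d n)) (hh k)) = res n - scaleC (s (hh n) (d n)) (hh n)"
    by (simp add: lessThan_Suc_atMost[symmetric] algebra_simps)
  have coef: "s (hh n) (d n) = s (hh n) (res n)"
    by (rule gs_coef) (simp add: gs_orth)
  show ?thesis
  proof (cases "0 < Re (s (res n) (res n))")
    case True
    define \<sigma> where "\<sigma> = Re (s (res n) (res n))"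
    have \<sigma>: "\<sigma> > 0" using True \<sigma>_def by simp
    define c where "c = complex_of_real (1 / sqrt \<sigma>)"
    have hn: "hh n = scaleC c (res n)" using True by (subst gs_unfold) (simp add: c_def \<sigma>_def)
    have "s (hh n) (res n) = cnj c * complex_of_real \<sigma>"
      unfolding hn by (simp add: s_scale_left \<sigma>_def s_self[of "res n", symmetric])
    then have A: "s (hh n) (d n) = cnj c * complex_of_real \<sigma>" using coef by simp
    have "scaleC (s (hh n) (d n)) (hh n) = scaleC (cnj c * complex_of_real \<sigma> * c) (res n)"
      unfolding A unfolding hn by (simp add: scaleC_scaleC)
    also have "cnj c * complex_of_real \<sigma> * c = 1"
      using \<sigma> by (simp add: c_def flip: of_real_mult; simp add: field_simps)
    finally have "scaleC (s (hh n) (d n)) (hh n) = res n" by (simp add: scaleC_one)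
    then show ?thesis by (simp add: split)
  next
    case False
    then have "hh n = 0" by (subst gs_unfold) simp
    then show ?thesis using False s_nonneg[of "res n"] by (simp add: split)
  qed
qed

end

end


context semi_inner
begin

context
  fixes d :: "nat \<Rightarrow> 'a"
begin

definition pK :: "nat set \<Rightarrow> 'a \<Rightarrow> real" where
  "pK K v = Re (s (v - (\<Sum>k\<in>K. scaleC (s (gs s d k) v) (gs s d k))) (v - (\<Sum>k\<in>K. scaleC (s (gs s d k) v) (gs s d k))))"

lemma pK_eq: "finite K \<Longrightarrow> pK K v = Re (s v v) - (\<Sum>k\<in>K. (cmod (s (hh d k) v))\<^sup>2)"
  unfolding pK_def by (rule bessel_eq) (auto simp: gs_orth gs_norm)

lemma pK_nonneg: "0 \<le> pK K v"
  unfolding pK_def using s_nonneg by blast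

lemma bessel_gs: "finite K \<Longrightarrow> (\<Sum>k\<in>K. (cmod (s (hh d k) v))\<^sup>2) \<le> Re (s v v)"
  using pK_eq[of K v] pK_nonneg[of K v] by linarith

lemma pK_le: "finite K \<Longrightarrow> pK K v \<le> Re (s v v)"
  using pK_eq[of K v] by (simp add: sum_nonneg)

lemma pK_add: "pK K (u + w) \<le> 2 * pK K u + 2 * pK K w"
proof -
  have E: "u + w - (\<Sum>k\<in>K. scaleC (s (hh d k) (u + w)) (hh d k))
      = (u - (\<Sum>k\<in>K. scaleC (s (hh d k) u) (hh d k))) + (w - (\<Sum>k\<in>K. scaleC (s (hh d k) w) (hh d k)))"
    by (simp add: s_add_right scaleC_add_left sum.distrib algebra_simps)
  show ?thesis unfolding pK_def E by (rule s_parallelogram)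
qed

lemma pK_dn: "finite K \<Longrightarrow> {..m} \<subseteq> K \<Longrightarrow> pK K (d m) = 0"
proof -
  assume K: "finite K" "{..m} \<subseteq> K"
  have "pK {..m} (d m) = 0" unfolding pK_def by (rule gs_residual)
  then have "Re (s (d m) (d m)) = (\<Sum>k\<in>{..m}. (cmod (s (hh d k) (d m)))\<^sup>2)"
    using pK_eq[of "{..m}" "d m"] by simp
  also have "\<dots> \<le> (\<Sum>k\<in>K. (cmod (s (hh d k) (d m)))\<^sup>2)"
    using K by (intro sum_mono2) auto
  finally show ?thesis using pK_eq[of K "d m"] pK_nonneg[of K "d m"] K by linarith
qed

lemma parseval_semi:
  assumes approx: "\<And>v e. e > 0 \<Longrightarrow> \<exists>n. Re (s (v - d n) (v - d n)) < e"
  shows "((\<lambda>k. (cmod (s (hh d k) v))\<^sup>2) has_sum Re (s v v)) UNIV"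
proof -
  let ?f = "\<lambda>k. (cmod (s (hh d k) v))\<^sup>2"
  have bdd: "bdd_above (sum ?f ` {F. F \<subseteq> UNIV \<and> finite F})"
    using bessel_gs by (auto intro!: bdd_aboveI[where M="Re (s v v)"])
  have sm: "?f summable_on UNIV"
    by (rule nonneg_bdd_above_summable_on) (use bdd in auto)
  have le: "infsum ?f UNIV \<le> Re (s v v)"
    by (rule infsum_le_finite_sums[OF sm]) (use bessel_gs in auto)
  have ge: "Re (s v v) - e \<le> infsum ?f UNIV" if "e > 0" for e
  proof -
    obtain n where n: "Re (s (v - d n) (v - d n)) < e / 2" using approx[of "e/2"] \<open>e > 0\<close> by auto
    have "pK {..n} v \<le> 2 * pK {..n} (d n) + 2 * pK {..n} (v - d n)"
      using pK_add[of "{..n}" "d n" "v - d n"] by simp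
    also have "pK {..n} (d n) = 0" by (rule pK_dn) auto
    also have "pK {..n} (v - d n) \<le> Re (s (v - d n) (v - d n))" by (rule pK_le) simp
    finally have "pK {..n} v < e" using n by simp
    then have "Re (s v v) - e \<le> sum ?f {..n}" using pK_eq[of "{..n}" v] by simp
    also have "\<dots> \<le> infsum ?f UNIV" by (rule finite_sum_le_infsum[OF sm]) auto
    finally show ?thesis .
  qed
  have "infsum ?f UNIV = Re (s v v)"
  proof (rule antisym[OF le])
    show "Re (s v v) \<le> infsum ?f UNIV"
    proof (rule field_le_epsilon)
      fix e :: real assume "e > 0" then show "Re (s v v) \<le> infsum ?f UNIV + e" using ge[of e] by simp
    qed
  qed
  with sm show ?thesis by (metis has_sum_infsum)
qed

end

end

lemma summable_cauchy:
  fixes f :: "'b \<Rightarrow> 'a::{real_normed_vector, complete_space}"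
  assumes C: "\<And>e. e > 0 \<Longrightarrow> \<exists>F. finite F \<and> (\<forall>G. finite G \<and> G \<inter> F = {} \<longrightarrow> norm (sum f G) < e)"
  shows "f summable_on UNIV"
proof -
  have "\<exists>P. eventually P (finite_subsets_at_top UNIV) \<and>
              (\<forall>F F'. P F \<and> P F' \<longrightarrow> dist (sum f F) (sum f F') < e)" if "e > 0" for e
  proof -
    obtain F0 where F0: "finite F0" "\<And>G. finite G \<Longrightarrow> G \<inter> F0 = {} \<Longrightarrow> norm (sum f G) < e / 2"
      using C[of "e/2"] \<open>e > 0\<close> by auto
    define P where "P F \<longleftrightarrow> finite F \<and> F0 \<subseteq> F" for F :: "'b set"
    have ev: "eventually P (finite_subsets_at_top UNIV)"
      unfolding P_def eventually_finite_subsets_at_top using F0(1) by auto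
    have "dist (sum f F1) (sum f F2) < e" if "P F1" "P F2" for F1 F2
    proof -
      have s1: "sum f F1 = sum f F0 + sum f (F1 - F0)"
        using that(1) unfolding P_def by (metis add.commute sum.subset_diff)
      have s2: "sum f F2 = sum f F0 + sum f (F2 - F0)"
        using that(2) unfolding P_def by (metis add.commute sum.subset_diff)
      have "dist (sum f F1) (sum f F2) = norm (sum f (F1 - F0) - sum f (F2 - F0))"
        by (simp add: s1 s2 dist_norm)
      also have "\<dots> \<le> norm (sum f (F1 - F0)) + norm (sum f (F2 - F0))" by (rule norm_triangle_ineq4)
      also have "\<dots> < e / 2 + e / 2"
        using that unfolding P_def by (intro add_strict_mono F0(2)) auto
      finally show ?thesis by simp
    qed
    with ev show ?thesis by blast
  qed
  then have "cauchy_filter (filtermap (sum f) (finite_subsets_at_top UNIV))"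
    by (simp add: cauchy_filter_metric_filtermap)
  moreover have "complete (UNIV::'a set)"
    by (meson Cauchy_convergent UNIV_I complete_def convergent_def)
  ultimately obtain L' where "(sum f \<longlongrightarrow> L') (finite_subsets_at_top UNIV)"
    using complete_uniform[where S=UNIV] by (force simp add: filterlim_def)
  then show ?thesis
    using summable_on_def has_sum_def by blast
qed


interpretation ci: semi_inner "cinner :: 'a::complex_inner \<Rightarrow> 'a \<Rightarrow> complex"
proof
  fix x y z :: 'a and c
  show "cinner x (y + z) = cinner x y + cinner x z" by (rule cinner_add_right)
  show "cinner x (scaleC c y) = c * cinner x y" by (rule cinner_scaleC_right)
  show "cinner x y = cnj (cinner y x)" by (rule cinner_commute)
  show "0 \<le> Re (cinner x x) \<and> Im (cinner x x) = 0" by (rule cinner_ge_zero)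
qed

lemma tail_small:
  fixes g :: "'b \<Rightarrow> real"
  assumes sm: "g summable_on UNIV" and nn: "\<And>k. g k \<ge> 0" and e: "e > 0"
  shows "\<exists>F. finite F \<and> (\<forall>G. finite G \<and> G \<inter> F = {} \<longrightarrow> sum g G < e)"
proof -
  let ?S = "infsum g UNIV"
  have "(sum g \<longlongrightarrow> ?S) (finite_subsets_at_top UNIV)"
    using sm has_sum_def has_sum_infsum by blast
  then have "eventually (\<lambda>F. dist (sum g F) ?S < e) (finite_subsets_at_top UNIV)"
    using e tendstoD by blast
  then obtain F where F: "finite F" "\<And>Y. finite Y \<Longrightarrow> F \<subseteq> Y \<Longrightarrow> dist (sum g Y) ?S < e"
    unfolding eventually_finite_subsets_at_top by auto
  show ?thesis
  proof (intro exI conjI allI impI)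
    fix G assume G: "finite G \<and> G \<inter> F = {}"
    have "sum g (F \<union> G) \<le> ?S"
      by (rule finite_sum_le_infsum[OF sm]) (use G F nn in auto)
    moreover have "sum g (F \<union> G) = sum g F + sum g G"
      using G F by (simp add: sum.union_disjoint inf_commute)
    moreover have "?S - sum g F < e" using F(2)[of F] F(1) by (simp add: dist_real_def)
    ultimately show "sum g G < e" by linarith
  qed (rule F(1))
qed

lemma gs_comb_norm:
  fixes u :: "nat \<Rightarrow> 'a::complex_inner"
  assumes "finite G"
  shows "(norm (\<Sum>k\<in>G. scaleC (c k) (gs cinner u k)))\<^sup>2 \<le> (\<Sum>k\<in>G. (cmod (c k))\<^sup>2)"
proof -
  let ?h = "gs cinner u"
  have "(norm (\<Sum>k\<in>G. scaleC (c k) (?h k)))\<^sup>2 = Re (cinner (\<Sum>k\<in>G. scaleC (c k) (?h k)) (\<Sum>k\<in>G. scaleC (c k) (?h k)))"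
    by (simp add: cinner_self_Re)
  also have "\<dots> = Re (\<Sum>k\<in>G. cnj (c k) * c k * cinner (?h k) (?h k))"
    by (subst ci.s_comb_comb[OF assms]) (auto simp: ci.gs_orth)
  also have "\<dots> = (\<Sum>k\<in>G. Re (cnj (c k) * c k * cinner (?h k) (?h k)))" by (simp add: Re_sum)
  also have "\<dots> \<le> (\<Sum>k\<in>G. (cmod (c k))\<^sup>2)"
  proof (rule sum_mono)
    fix k
    from ci.gs_norm[of u k] show "Re (cnj (c k) * c k * cinner (?h k) (?h k)) \<le> (cmod (c k))\<^sup>2"
      by (auto simp: cnj_mult_self)
  qed
  finally show ?thesis .
qed

lemma gs_summable:
  fixes u :: "nat \<Rightarrow> 'a::chilbert_space"
  assumes B: "\<And>K. finite K \<Longrightarrow> (\<Sum>k\<in>K. (cmod (c k))\<^sup>2) \<le> B"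
  shows "(\<lambda>k. scaleC (c k) (gs cinner u k)) summable_on UNIV"
proof (rule summable_cauchy)
  fix e :: real assume e: "e > 0"
  let ?g = "\<lambda>k. (cmod (c k))\<^sup>2"
  have sm: "?g summable_on UNIV"
    by (rule nonneg_bdd_above_summable_on) (use B in \<open>auto intro!: bdd_aboveI[where M=B]\<close>)
  obtain F where F: "finite F" "\<And>G. finite G \<Longrightarrow> G \<inter> F = {} \<Longrightarrow> sum ?g G < e\<^sup>2"
    using tail_small[OF sm _ , of "e\<^sup>2"] e by auto
  show "\<exists>F. finite F \<and> (\<forall>G. finite G \<and> G \<inter> F = {} \<longrightarrow> norm (\<Sum>k\<in>G. scaleC (c k) (gs cinner u k)) < e)"
  proof (intro exI conjI allI impI)
    fix G assume G: "finite G \<and> G \<inter> F = {}"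
    have "(norm (\<Sum>k\<in>G. scaleC (c k) (gs cinner u k)))\<^sup>2 < e\<^sup>2"
      using gs_comb_norm[of G c u] F(2)[of G] G by linarith
    then show "norm (\<Sum>k\<in>G. scaleC (c k) (gs cinner u k)) < e"
      using e by (simp add: power_less_imp_less_base)
  qed (rule F(1))
qed

lemma gs_in_span: "gs cinner u n \<in> cspan (range u)"
proof (induction n rule: less_induct)
  case (less n)
  have "u n - (\<Sum>k<n. scaleC (cinner (gs cinner u k) (u n)) (gs cinner u k)) \<in> cspan (range u)"
    by (intro cm.span_diff cm.span_sum cm.span_scale less.IH cm.span_base) auto
  then show ?case
    by (subst ci.gs_unfold) (auto intro: cm.span_scale cm.span_zero)
qed

lemma gs_expand_u:
  fixes u :: "nat \<Rightarrow> 'a::complex_inner"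
  shows "u i = (\<Sum>k\<in>{..i}. scaleC (cinner (gs cinner u k) (u i)) (gs cinner u k))"
proof -
  have "Re (cinner (u i - (\<Sum>k\<in>{..i}. scaleC (cinner (gs cinner u k) (u i)) (gs cinner u k)))
        (u i - (\<Sum>k\<in>{..i}. scaleC (cinner (gs cinner u k) (u i)) (gs cinner u k)))) = 0"
    by (rule ci.gs_residual)
  then show ?thesis by (simp add: cinner_self_Re)
qed

lemma gs_projection:
  fixes u :: "nat \<Rightarrow> 'a::chilbert_space"
  shows "\<exists>P. ((\<lambda>k. scaleC (cinner (gs cinner u k) y) (gs cinner u k)) has_sum P) UNIV
          \<and> P \<in> closure (cspan (range u)) \<and> (\<forall>i. cinner (u i) (y - P) = 0)"
proof -
  let ?h = "gs cinner u"
  let ?f = "\<lambda>k. scaleC (cinner (?h k) y) (?h k)"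
  have sm: "?f summable_on UNIV"
    by (rule gs_summable[where B="Re (cinner y y)"]) (rule ci.bessel_gs)
  define P where "P = infsum ?f UNIV"
  have hs: "(?f has_sum P) UNIV" using sm P_def by simp
  have inM: "P \<in> closure (cspan (range u))"
  proof (rule Lim_in_closed_set)
    show "closed (closure (cspan (range u)))" by simp
    show "\<forall>\<^sub>F x in finite_subsets_at_top UNIV. sum ?f x \<in> closure (cspan (range u))"
      by (intro always_eventually allI subsetD[OF closure_subset] cm.span_sum cm.span_scale gs_in_span)
    show "finite_subsets_at_top UNIV \<noteq> bot" by simp
    show "(sum ?f \<longlongrightarrow> P) (finite_subsets_at_top UNIV)" using hs has_sum_def by blast
  qed
  have orth_h: "cinner (?h j) (y - P) = 0" for j
  proof -
    have "((\<lambda>k. cinner (?h j) (?f k)) has_sum cinner (?h j) P) UNIV"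
      by (rule has_sum_bounded_linear[OF bounded_linear_cinner_right hs])
    moreover have "((\<lambda>k. cinner (?h j) (?f k)) has_sum (cinner (?h j) y * cinner (?h j) (?h j))) UNIV"
      by (rule has_sum_finite_neutralI[where B="{j}"]) (auto simp: cinner_scaleC_right ci.gs_orth)
    ultimately have "cinner (?h j) P = cinner (?h j) y * cinner (?h j) (?h j)"
      using has_sum_unique by blast
    then show ?thesis using ci.gs_norm[of u j] by (auto simp: cinner_diff_right)
  qed
  have "cinner (u i) (y - P) = 0" for i
  proof -
    have "cinner (u i) (y - P) = cinner (\<Sum>k\<in>{..i}. scaleC (cinner (?h k) (u i)) (?h k)) (y - P)"
      by (subst gs_expand_u[of u i]) (rule refl)
    also have "\<dots> = 0" by (simp add: ci.s_comb_left orth_h)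
    finally show ?thesis .
  qed
  with hs inM show ?thesis by blast
qed

lemma dense_seq:
  assumes "separable_space TYPE('a::topological_space)"
  shows "\<exists>d::nat \<Rightarrow> 'a. closure (range d) = UNIV"
proof -
  obtain D :: "'a set" where D: "countable D" "closure D = UNIV"
    using assms unfolding separable_space_def by blast
  have "D \<noteq> {}" using D(2) by auto
  then have "range (from_nat_into D) = D" using D(1) by simp
  then show ?thesis using D(2) by metis
qed

lemma orth_dense_zero:
  fixes e :: "'a::complex_inner"
  assumes "closure (range d) = UNIV" "\<And>i. cinner (d i) e = 0"
  shows "e = 0"
proof -
  have "closed {z. cinner z e = 0}"
    using closed_Collect_eq[of "\<lambda>z. cinner z e" "\<lambda>_. 0"]
    by (simp add: linear_continuous_on bounded_linear_cinner_left)
  then have "closure (range d) \<subseteq> {z. cinner z e = 0}"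
    using assms(2) by (intro closure_minimal) auto
  then have "cinner e e = 0" using assms(1) by auto
  then show ?thesis by (simp add: cinner_eq_zero_iff)
qed

lemma expansion:
  fixes d :: "nat \<Rightarrow> 'a::chilbert_space"
  assumes "closure (range d) = UNIV"
  shows "((\<lambda>k. scaleC (cinner (gs cinner d k) v) (gs cinner d k)) has_sum v) UNIV"
proof -
  obtain P where P: "((\<lambda>k. scaleC (cinner (gs cinner d k) v) (gs cinner d k)) has_sum P) UNIV"
     "\<And>i. cinner (d i) (v - P) = 0"
    using gs_projection[of d v] by blast
  have "v - P = 0" by (rule orth_dense_zero[OF assms P(2)])
  with P(1) show ?thesis by simp
qed


lemma riesz:
  fixes l :: "'a::chilbert_space \<Rightarrow> complex"
  assumes sep: "separable_space TYPE('a)"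
    and add: "\<And>x y. l (x + y) = l x + l y" and sc: "\<And>c x. l (scaleC c x) = c * l x"
    and bd: "\<And>x. cmod (l x) \<le> B * norm x"
  shows "\<exists>w. \<forall>x. l x = cinner w x"
proof -
  obtain d :: "nat \<Rightarrow> 'a" where d: "closure (range d) = UNIV" using dense_seq[OF sep] by blast
  let ?h = "gs cinner d"
  have l0: "l 0 = 0" using add[of 0 0] by simp
  have lsum: "l (sum g K) = (\<Sum>k\<in>K. l (g k))" for g and K :: "nat set"
    by (induct K rule: infinite_finite_induct) (auto simp: l0 add)
  have bl: "bounded_linear l"
  proof (rule bounded_linear_intro[where K=B])
    show "l (x + y) = l x + l y" for x y by (rule add)
    show "l (r *\<^sub>R x) = r *\<^sub>R l x" for r x by (simp add: scaleC_real sc scaleR_conv_of_real)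
    show "norm (l x) \<le> norm x * B" for x using bd[of x] by (simp add: mult.commute)
  qed
  have cb: "(\<Sum>k\<in>K. (cmod (cnj (l (?h k))))\<^sup>2) \<le> B\<^sup>2" if K: "finite K" for K
  proof -
    define S where "S = (\<Sum>k\<in>K. (cmod (l (?h k)))\<^sup>2)"
    define v where "v = (\<Sum>k\<in>K. scaleC (cnj (l (?h k))) (?h k))"
    have "l v = (\<Sum>k\<in>K. cnj (l (?h k)) * l (?h k))" unfolding v_def by (simp add: lsum sc)
    also have "\<dots> = complex_of_real S" unfolding S_def by (simp add: cnj_mult_self)
    finally have lv: "l v = complex_of_real S" .
    have S0: "S \<ge> 0" unfolding S_def by (simp add: sum_nonneg)
    have nv: "(norm v)\<^sup>2 \<le> S" unfolding v_def S_def using gs_comb_norm[OF K, of "\<lambda>k. cnj (l (?h k))" d] by simp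
    have "S \<le> B * norm v" using bd[of v] lv S0 by simp
    then have "S\<^sup>2 \<le> (B * norm v)\<^sup>2" using S0 by (simp add: power_mono)
    also have "\<dots> = B\<^sup>2 * (norm v)\<^sup>2" by (simp add: power_mult_distrib)
    also have "\<dots> \<le> B\<^sup>2 * S" using nv by (simp add: mult_left_mono)
    finally have "S * S \<le> B\<^sup>2 * S" by (simp add: power2_eq_square)
    then have "S \<le> B\<^sup>2" using S0
      by (cases "S = 0") (simp_all add: mult_le_cancel_right)
    then show ?thesis unfolding S_def by simp
  qed
  let ?f = "\<lambda>k. scaleC (cnj (l (?h k))) (?h k)"
  have sm: "?f summable_on UNIV" by (rule gs_summable[OF cb])
  define w where "w = infsum ?f UNIV"
  have hw: "(?f has_sum w) UNIV" using sm w_def by simp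
  have "l x = cinner w x" for x
  proof -
    have "((\<lambda>k. l (scaleC (cinner (?h k) x) (?h k))) has_sum l x) UNIV"
      by (rule has_sum_bounded_linear[OF bl expansion[OF d]])
    moreover have "((\<lambda>k. cinner (?f k) x) has_sum cinner w x) UNIV"
      by (rule has_sum_bounded_linear[OF bounded_linear_cinner_left hw])
    moreover have "(\<lambda>k. l (scaleC (cinner (?h k) x) (?h k))) = (\<lambda>k. cinner (?f k) x)"
      by (simp add: sc cinner_scaleC_left mult.commute)
    ultimately show ?thesis using has_sum_unique by metis
  qed
  then show ?thesis by blast
qed

lemma adjoint_prop:
  fixes f :: "'a::chilbert_space \<Rightarrow> 'a"
  assumes sep: "separable_space TYPE('a)" and bf: "bounded_op f"
  shows "cinner (f x) y = cinner x (adjoint f y)"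
proof -
  obtain K where K: "\<And>x. norm (f x) \<le> norm x * K" using bf by (auto simp: bounded_op_def)
  have ex: "\<exists>w. \<forall>x. cinner (f x) y = cinner x w" for y
  proof -
    have "\<exists>w. \<forall>x. cinner y (f x) = cinner w x"
    proof (rule riesz[OF sep])
      show "cinner y (f (x + z)) = cinner y (f x) + cinner y (f z)" for x z
        by (simp add: bop_add[OF bf] cinner_add_right)
      show "cinner y (f (scaleC c x)) = c * cinner y (f x)" for c x
        by (simp add: bop_scaleC[OF bf] cinner_scaleC_right)
      show "cmod (cinner y (f x)) \<le> (norm y * K) * norm x" for x
      proof -
        have "cmod (cinner y (f x)) \<le> norm y * norm (f x)" by (rule cauchy_schwarz)
        also have "\<dots> \<le> norm y * (norm x * K)" by (rule mult_left_mono[OF K]) simp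
        finally show ?thesis by (simp add: mult_ac)
      qed
    qed
    then obtain w where w: "\<And>x. cinner y (f x) = cinner w x" by blast
    have "cinner (f x) y = cinner x w" for x
      using w[of x] cinner_commute[of "f x" y] cinner_commute[of x w] by simp
    then show ?thesis by blast
  qed
  then obtain g where g: "\<And>y x. cinner (f x) y = cinner x (g y)" by metis
  have uniq: "g' = g" if g': "\<forall>x y. cinner (f x) y = cinner x (g' y)" for g'
  proof
    fix y
    have "cinner x (g' y - g y) = 0" for x
    proof -
      have a: "cinner (f x) y = cinner x (g' y)" using g' by blast
      have b: "cinner (f x) y = cinner x (g y)" by (rule g)
      show ?thesis using a b by (simp add: cinner_diff_right)
    qed
    from this[of "g' y - g y"] show "g' y = g y" by (simp add: cinner_eq_zero_iff)
  qed
  have "adjoint f = g" unfolding adjoint_def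
    by (rule the_equality) (use g uniq in auto)
  then show ?thesis using g by simp
qed


lemma kraus_bop: "kraus_family \<alpha> \<Longrightarrow> bounded_op (\<alpha> i)"
  by (simp add: kraus_family_def)

lemma improving_imp_dense:
  fixes \<alpha> :: "nat \<Rightarrow> 'a::chilbert_space \<Rightarrow> 'a"
  assumes kf: "kraus_family \<alpha>" and pi: "positivity_improving (kraus_map \<alpha>)" and x: "x \<noteq> 0"
  shows "closure (cspan (range (\<lambda>i. adjoint (\<alpha> i) x))) = UNIV"
proof (rule ccontr)
  let ?u = "\<lambda>i. adjoint (\<alpha> i) x"
  assume "\<not> ?thesis"
  then obtain y where y: "y \<notin> closure (cspan (range ?u))" by auto
  obtain P where P: "P \<in> closure (cspan (range ?u))" "\<And>i. cinner (?u i) (y - P) = 0"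
    using gs_projection[of ?u y] by blast
  define e where "e = y - P"
  have e0: "e \<noteq> 0" using y P(1) e_def by auto
  have eu: "cinner e (?u i) = 0" for i
    using P(2)[of i] cinner_commute[of e "?u i"] e_def by simp
  define A where "A = (\<lambda>v. scaleC (cinner e v) e)"
  have bA: "bounded_op A"
    unfolding bounded_op_def
  proof (intro conjI allI exI)
    show "A (v + w) = A v + A w" for v w by (simp add: A_def cinner_add_right scaleC_add_left)
    show "A (scaleC c v) = scaleC c (A v)" for c v by (simp add: A_def cinner_scaleC_right scaleC_scaleC)
    show "norm (A v) \<le> norm v * (norm e * norm e)" for v
    proof -
      have "norm (A v) = cmod (cinner e v) * norm e" by (simp add: A_def norm_scaleC)
      also have "\<dots> \<le> (norm e * norm v) * norm e" by (rule mult_right_mono[OF cauchy_schwarz]) simp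
      finally show ?thesis by (simp add: mult_ac)
    qed
  qed
  have qA: "cinner v (A v) = complex_of_real ((cmod (cinner v e))\<^sup>2)" for v
  proof -
    have "cinner v (A v) = cinner e v * cinner v e" by (simp add: A_def cinner_scaleC_right)
    also have "cinner e v = cnj (cinner v e)" by (rule cinner_commute)
    finally show ?thesis by (simp add: cnj_mult_self)
  qed
  have tc: "pos_trace_class A"
    unfolding pos_trace_class_def
  proof (intro conjI allI impI)
    show "bounded_op A" by (rule bA)
    show "op_nonneg A" unfolding op_nonneg_def by (simp add: qA)
    fix E :: "'a set" assume E: "orthonormal E"
    show "(\<lambda>b. Re (cinner b (A b))) summable_on E"
    proof (rule nonneg_bdd_above_summable_on)
      show "0 \<le> Re (cinner b (A b))" for b by (simp add: qA)
      show "bdd_above (sum (\<lambda>b. Re (cinner b (A b))) ` {F. F \<subseteq> E \<and> finite F})"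
      proof (rule bdd_aboveI[where M="Re (cinner e e)"])
        fix r assume "r \<in> sum (\<lambda>b. Re (cinner b (A b))) ` {F. F \<subseteq> E \<and> finite F}"
        then obtain F where F: "F \<subseteq> E" "finite F" "r = sum (\<lambda>b. Re (cinner b (A b))) F" by auto
        have "(\<Sum>k\<in>F. (cmod (cinner (id k) e))\<^sup>2) \<le> Re (cinner e e)"
          by (rule ci.bessel_le) (use F E in \<open>auto simp: orthonormal_def\<close>)
        then show "r \<le> Re (cinner e e)" using F(3) by (simp add: qA)
      qed
    qed
  qed
  have A0: "A \<noteq> (\<lambda>_. 0)"
  proof
    assume "A = (\<lambda>_. 0)"
    then have "A e = 0" by simp
    then have "norm (A e) = 0" by simp
    moreover have "norm (A e) = (norm e)\<^sup>2 * norm e"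
      by (simp add: A_def norm_scaleC cinner_self norm_power)
    ultimately show False using e0 by simp
  qed
  have "op_pos (kraus_map \<alpha> A)" using pi tc A0 unfolding positivity_improving_def by blast
  moreover have "kraus_map \<alpha> A x = 0"
  proof -
    have "\<alpha> i (A (adjoint (\<alpha> i) x)) = 0" for i
      using eu[of i] bop_zero[OF kraus_bop[OF kf]] by (simp add: A_def)
    then show ?thesis by (simp add: kraus_map_def)
  qed
  ultimately show False using x unfolding op_pos_def by force
qed


lemma herm_of_nonneg:
  assumes bA: "bounded_op A" and nA: "op_nonneg A"
  shows "cinner u (A v) = cnj (cinner v (A u))"
proof -
  define a where "a = cinner u (A v)"
  define b where "b = cinner v (A u)"
  have im0: "Im (cinner z (A z)) = 0" for z using nA by (simp add: op_nonneg_def)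
  have e1: "cinner (u + v) (A (u + v)) = cinner u (A u) + cinner v (A v) + a + b"
    by (simp add: a_def b_def bop_add[OF bA] cinner_add_left cinner_add_right)
  have e2: "cinner (u + scaleC \<i> v) (A (u + scaleC \<i> v)) = cinner u (A u) + cinner v (A v) + \<i> * a - \<i> * b"
    by (simp add: a_def b_def bop_add[OF bA] bop_scaleC[OF bA] cinner_add_left cinner_add_right
        cinner_scaleC_left cinner_scaleC_right algebra_simps)
  have "Im a + Im b = 0" using arg_cong[OF e1, of Im] im0[of "u + v"] im0[of u] im0[of v] by simp
  moreover have "Re a - Re b = 0" using arg_cong[OF e2, of Im] im0[of "u + scaleC \<i> v"] im0[of u] im0[of v] by simp
  ultimately have "a = cnj b" by (simp add: complex_eq_iff)
  then show ?thesis by (simp add: a_def b_def)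
qed

lemma semi_inner_A:
  assumes bA: "bounded_op A" and nA: "op_nonneg A"
  shows "semi_inner (\<lambda>u v. cinner u (A v))"
proof
  fix x y z :: 'a and c
  show "cinner x (A (y + z)) = cinner x (A y) + cinner x (A z)" by (simp add: bop_add[OF bA] cinner_add_right)
  show "cinner x (A (scaleC c y)) = c * cinner x (A y)" by (simp add: bop_scaleC[OF bA] cinner_scaleC_right)
  show "cinner x (A y) = cnj (cinner y (A x))" by (rule herm_of_nonneg[OF bA nA])
  show "0 \<le> Re (cinner x (A x)) \<and> Im (cinner x (A x)) = 0" using nA by (simp add: op_nonneg_def)
qed

lemma has_sum_finite_sum:
  fixes f :: "'c \<Rightarrow> 'd \<Rightarrow> real"
  assumes "finite G" "\<And>i. i \<in> G \<Longrightarrow> (f i has_sum S i) A"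
  shows "((\<lambda>k. \<Sum>i\<in>G. f i k) has_sum (\<Sum>i\<in>G. S i)) A"
  using assms by (induct G rule: finite_induct) (auto intro: has_sum_add)

lemma trace_decomp:
  fixes A :: "'a::chilbert_space \<Rightarrow> 'a"
  assumes sep: "separable_space TYPE('a)" and tc: "pos_trace_class A"
  shows "\<exists>g::nat \<Rightarrow> 'a. \<exists>T. (\<forall>v. ((\<lambda>k. (cmod (cinner (g k) v))\<^sup>2) has_sum Re (cinner v (A v))) UNIV)
            \<and> (\<forall>K. finite K \<longrightarrow> (\<Sum>k\<in>K. (norm (g k))\<^sup>2) \<le> T)"
proof -
  have bA: "bounded_op A" and nA: "op_nonneg A" using tc by (auto simp: pos_trace_class_def)
  interpret sA: semi_inner "\<lambda>u v. cinner u (A v)" by (rule semi_inner_A[OF bA nA])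
  obtain d :: "nat \<Rightarrow> 'a" where d: "closure (range d) = UNIV" using dense_seq[OF sep] by blast
  obtain KA where KA: "\<And>x. norm (A x) \<le> norm x * KA" using bA by (auto simp: bounded_op_def)
  define K1 where "K1 = max KA 1"
  have K1b: "norm (A x) \<le> norm x * K1" for x
  proof -
    have "norm (A x) \<le> norm x * KA" by (rule KA)
    also have "\<dots> \<le> norm x * K1" by (rule mult_left_mono) (auto simp: K1_def)
    finally show ?thesis .
  qed
  have K1: "K1 > 0" "\<And>x. norm (A x) \<le> norm x * K1" using K1b by (auto simp: K1_def)
  define hA where "hA = gs (\<lambda>u v. cinner u (A v)) d"
  define g where "g k = A (hA k)" for k
  have g_inner: "cinner (hA k) (A v) = cinner (g k) v" for k v
    unfolding g_def using herm_of_nonneg[OF bA nA, of "hA k" v] cinner_commute[of "A (hA k)" v] by simp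
  have approx: "\<exists>n. Re (cinner (v - d n) (A (v - d n))) < e" if e: "e > 0" for v e
  proof -
    have "v \<in> closure (range d)" using d by simp
    then obtain n where n: "dist (d n) v < sqrt (e / K1)"
      using e K1(1) unfolding closure_approachable by force
    have "Re (cinner (v - d n) (A (v - d n))) \<le> cmod (cinner (v - d n) (A (v - d n)))" by (rule complex_Re_le_cmod)
    also have "\<dots> \<le> norm (v - d n) * norm (A (v - d n))" by (rule cauchy_schwarz)
    also have "\<dots> \<le> norm (v - d n) * (norm (v - d n) * K1)" by (rule mult_left_mono[OF K1(2)]) simp
    also have "\<dots> = (norm (v - d n))\<^sup>2 * K1" by (simp add: power2_eq_square)
    also have "\<dots> < (sqrt (e / K1))\<^sup>2 * K1"
      using n K1(1) by (intro mult_strict_right_mono power_strict_mono) (auto simp: dist_norm norm_minus_commute)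
    also have "\<dots> = e" using e K1(1) by simp
    finally show ?thesis by blast
  qed
  have pars: "((\<lambda>k. (cmod (cinner (g k) v))\<^sup>2) has_sum Re (cinner v (A v))) UNIV" for v
    using sA.parseval_semi[of d v] approx unfolding hA_def[symmetric] g_inner by blast
  define f where "f = gs cinner g"
  define F where "F = f ` {j. f j \<noteq> 0}"
  have f_orth: "j \<noteq> k \<Longrightarrow> cinner (f j) (f k) = 0" for j k unfolding f_def by (rule ci.gs_orth)
  have f_norm: "f j \<noteq> 0 \<Longrightarrow> cinner (f j) (f j) = 1" for j using ci.gs_norm[of g j] unfolding f_def by blast
  have f_inj: "inj_on f {j. f j \<noteq> 0}"
  proof (rule inj_onI)
    fix j k assume "j \<in> {j. f j \<noteq> 0}" "k \<in> {j. f j \<noteq> 0}" "f j = f k"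
    then show "j = k" using f_orth[of j k] f_norm[of j] by (cases "j = k") auto
  qed
  have onF: "orthonormal F"
    unfolding orthonormal_def F_def using f_norm f_orth by (auto, metis)
  define q where "q b = Re (cinner b (A b))" for b
  have q0: "q b \<ge> 0" for b unfolding q_def using nA by (simp add: op_nonneg_def)
  have smF: "q summable_on F" using tc onF unfolding pos_trace_class_def q_def by blast
  define T where "T = infsum q F"
  have bound: "(\<Sum>k\<in>K. (norm (g k))\<^sup>2) \<le> T" if K: "finite K" for K
  proof -
    obtain n where n: "K \<subseteq> {..n}" using K finite_nat_iff_bounded_le by blast
    have gk: "(norm (g k))\<^sup>2 = (\<Sum>j\<in>{..n}. (cmod (cinner (f j) (g k)))\<^sup>2)" if "k \<in> K" for k
    proof -
      have "ci.pK g {..n} (g k) = 0" by (rule ci.pK_dn) (use that n in auto)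
      then show ?thesis using ci.pK_eq[of "{..n}" g "g k"] unfolding f_def by (simp add: cinner_self_Re)
    qed
    have "(\<Sum>k\<in>K. (norm (g k))\<^sup>2) = (\<Sum>k\<in>K. \<Sum>j\<in>{..n}. (cmod (cinner (f j) (g k)))\<^sup>2)"
      using gk by simp
    also have "\<dots> = (\<Sum>j\<in>{..n}. \<Sum>k\<in>K. (cmod (cinner (f j) (g k)))\<^sup>2)" by (rule sum.swap)
    also have "\<dots> \<le> (\<Sum>j\<in>{..n}. q (f j))"
    proof (rule sum_mono)
      fix j
      have "(\<Sum>k\<in>K. (cmod (cinner (f j) (g k)))\<^sup>2) = (\<Sum>k\<in>K. (cmod (cinner (hA k) (A (f j))))\<^sup>2)"
        by (simp add: g_inner cinner_commute[of "f j"])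
      also have "\<dots> \<le> q (f j)" unfolding q_def hA_def by (rule sA.bessel_gs[OF K])
      finally show "(\<Sum>k\<in>K. (cmod (cinner (f j) (g k)))\<^sup>2) \<le> q (f j)" .
    qed
    also have "\<dots> = (\<Sum>j\<in>{j\<in>{..n}. f j \<noteq> 0}. q (f j))"
      by (rule sum.mono_neutral_right) (auto simp: q_def)
    also have "\<dots> = sum q (f ` {j\<in>{..n}. f j \<noteq> 0})"
      by (subst sum.reindex) (auto intro: inj_on_subset[OF f_inj])
    also have "\<dots> \<le> T" unfolding T_def
      by (rule finite_sum_le_infsum[OF smF]) (auto simp: F_def q0)
    finally show ?thesis .
  qed
  show ?thesis using pars bound by blast
qed


lemma sum_sqrt_CS:
  fixes a p r :: "'c \<Rightarrow> real"
  assumes "\<And>i. i \<in> G \<Longrightarrow> 0 \<le> a i" "\<And>i. i \<in> G \<Longrightarrow> 0 \<le> p i" "\<And>i. i \<in> G \<Longrightarrow> 0 \<le> r i"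
    and "\<And>i. i \<in> G \<Longrightarrow> (a i)\<^sup>2 \<le> p i * r i"
  shows "(\<Sum>i\<in>G. a i)\<^sup>2 \<le> (\<Sum>i\<in>G. p i) * (\<Sum>i\<in>G. r i)"
proof -
  have "(\<Sum>i\<in>G. a i) \<le> (\<Sum>i\<in>G. sqrt (p i) * sqrt (r i))"
  proof (rule sum_mono)
    fix i assume i: "i \<in> G"
    have "a i = sqrt ((a i)\<^sup>2)" using assms(1)[OF i] by simp
    also have "\<dots> \<le> sqrt (p i * r i)" using assms(4)[OF i] by (rule real_sqrt_le_mono)
    finally show "a i \<le> sqrt (p i) * sqrt (r i)" by (simp add: real_sqrt_mult)
  qed
  moreover have "0 \<le> (\<Sum>i\<in>G. a i)" using assms(1) by (simp add: sum_nonneg)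
  ultimately have "(\<Sum>i\<in>G. a i)\<^sup>2 \<le> (\<Sum>i\<in>G. sqrt (p i) * sqrt (r i))\<^sup>2"
    by (intro power_mono) auto
  also have "\<dots> \<le> (\<Sum>i\<in>G. (sqrt (p i))\<^sup>2) * (\<Sum>i\<in>G. (sqrt (r i))\<^sup>2)"
    by (rule Cauchy_Schwarz_ineq_sum)
  also have "(\<Sum>i\<in>G. (sqrt (p i))\<^sup>2) = (\<Sum>i\<in>G. p i)"
    by (rule sum.cong) (simp_all add: assms(2))
  also have "(\<Sum>i\<in>G. (sqrt (r i))\<^sup>2) = (\<Sum>i\<in>G. r i)"
    by (rule sum.cong) (simp_all add: assms(3))
  finally show ?thesis .
qed

lemma dense_imp_improving:
  fixes \<alpha> :: "nat \<Rightarrow> 'a::chilbert_space \<Rightarrow> 'a"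
  assumes sep: "separable_space TYPE('a)" and kf: "kraus_family \<alpha>"
    and dense: "\<forall>x::'a. x \<noteq> 0 \<longrightarrow> closure (cspan (range (\<lambda>i. adjoint (\<alpha> i) x))) = UNIV"
  shows "positivity_improving (kraus_map \<alpha>)"
  unfolding positivity_improving_def op_pos_def
proof (intro allI impI)
  fix A :: "'a \<Rightarrow> 'a" and x :: 'a
  assume A: "pos_trace_class A \<and> A \<noteq> (\<lambda>_. 0)" and x: "x \<noteq> 0"
  have bA: "bounded_op A" and nA: "op_nonneg A" using A by (auto simp: pos_trace_class_def)
  interpret sA: semi_inner "\<lambda>u v. cinner u (A v)" by (rule semi_inner_A[OF bA nA])
  obtain g :: "nat \<Rightarrow> 'a" and T where hg: "\<And>v. ((\<lambda>k. (cmod (cinner (g k) v))\<^sup>2) has_sum Re (cinner v (A v))) UNIV"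
    and gT: "\<And>K. finite K \<Longrightarrow> (\<Sum>k\<in>K. (norm (g k))\<^sup>2) \<le> T"
  proof -
    have tcA: "pos_trace_class A" using A by blast
    have "\<exists>g::nat \<Rightarrow> 'a. \<exists>T. (\<forall>v. ((\<lambda>k. (cmod (cinner (g k) v))\<^sup>2) has_sum Re (cinner v (A v))) UNIV)
            \<and> (\<forall>K. finite K \<longrightarrow> (\<Sum>k\<in>K. (norm (g k))\<^sup>2) \<le> T)"
      by (rule trace_decomp) (rule sep, rule tcA)
    then show ?thesis using that by blast
  qed
  define q where "q v = Re (cinner v (A v))" for v
  have q0: "q v \<ge> 0" for v unfolding q_def using nA by (simp add: op_nonneg_def)
  have adj: "cinner (\<alpha> i u) v = cinner u (adjoint (\<alpha> i) v)" for i u v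
    by (rule adjoint_prop[OF sep kraus_bop[OF kf]])
  obtain c where c: "\<And>K v. finite K \<Longrightarrow> Re (cinner v (\<Sum>i\<in>K. adjoint (\<alpha> i) (\<alpha> i v))) \<le> c * Re (cinner v v)"
    using kf unfolding kraus_family_def by blast
  define C where "C = max c 0"
  have C0: "C \<ge> 0" by (simp add: C_def)
  have kb: "(\<Sum>i\<in>K. (norm (\<alpha> i v))\<^sup>2) \<le> C * (norm v)\<^sup>2" if K: "finite K" for K v
  proof -
    have "cinner v (adjoint (\<alpha> i) (\<alpha> i v)) = cinner (\<alpha> i v) (\<alpha> i v)" for i
      by (simp add: adj)
    then have "Re (cinner v (\<Sum>i\<in>K. adjoint (\<alpha> i) (\<alpha> i v))) = (\<Sum>i\<in>K. (norm (\<alpha> i v))\<^sup>2)"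
      by (simp add: cinner_sum_right Re_sum cinner_self_Re)
    then have "(\<Sum>i\<in>K. (norm (\<alpha> i v))\<^sup>2) \<le> c * (norm v)\<^sup>2" using c[OF K, of v] by (simp add: cinner_self_Re)
    also have "\<dots> \<le> C * (norm v)\<^sup>2" by (rule mult_right_mono) (auto simp: C_def)
    finally show ?thesis .
  qed
  let ?G = "\<lambda>k. (norm (g k))\<^sup>2"
  have smG: "?G summable_on UNIV"
    by (rule nonneg_bdd_above_summable_on) (use gT in \<open>auto intro!: bdd_aboveI[where M=T]\<close>)
  define TG where "TG = infsum ?G UNIV"
  have TG0: "TG \<ge> 0" unfolding TG_def by (rule infsum_nonneg) simp
  have hG: "(?G has_sum TG) UNIV" using smG TG_def by simp
  have key: "(\<Sum>i\<in>G. q (adjoint (\<alpha> i) w)) \<le> C * TG * (norm w)\<^sup>2" if G: "finite G" for G w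
  proof -
    have h1: "((\<lambda>k. \<Sum>i\<in>G. (cmod (cinner (\<alpha> i (g k)) w))\<^sup>2) has_sum (\<Sum>i\<in>G. q (adjoint (\<alpha> i) w))) UNIV"
      using has_sum_finite_sum[OF G, where f="\<lambda>i k. (cmod (cinner (\<alpha> i (g k)) w))\<^sup>2" and S="\<lambda>i. q (adjoint (\<alpha> i) w)" and A=UNIV]
        hg unfolding q_def adj by blast
    have h2: "((\<lambda>k. (C * (norm w)\<^sup>2) * ?G k) has_sum (C * (norm w)\<^sup>2) * TG) UNIV"
      by (rule has_sum_cmult_right[OF hG])
    have "(\<Sum>i\<in>G. q (adjoint (\<alpha> i) w)) \<le> (C * (norm w)\<^sup>2) * TG"
    proof (rule has_sum_mono[OF h1 h2])
      fix k
      have "(\<Sum>i\<in>G. (cmod (cinner (\<alpha> i (g k)) w))\<^sup>2) \<le> (\<Sum>i\<in>G. (norm (\<alpha> i (g k)))\<^sup>2 * (norm w)\<^sup>2)"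
      proof (rule sum_mono)
        fix i
        have "cmod (cinner (\<alpha> i (g k)) w) \<le> norm (\<alpha> i (g k)) * norm w" by (rule cauchy_schwarz)
        then show "(cmod (cinner (\<alpha> i (g k)) w))\<^sup>2 \<le> (norm (\<alpha> i (g k)))\<^sup>2 * (norm w)\<^sup>2"
          by (metis norm_ge_zero power_mono power_mult_distrib)
      qed
      also have "\<dots> = (\<Sum>i\<in>G. (norm (\<alpha> i (g k)))\<^sup>2) * (norm w)\<^sup>2" by (simp add: sum_distrib_right)
      also have "\<dots> \<le> (C * ?G k) * (norm w)\<^sup>2" by (rule mult_right_mono[OF kb[OF G]]) simp
      finally show "(\<Sum>i\<in>G. (cmod (cinner (\<alpha> i (g k)) w))\<^sup>2) \<le> (C * (norm w)\<^sup>2) * ?G k"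
        by (simp add: mult_ac)
    qed
    then show ?thesis by (simp add: mult_ac)
  qed
  define y where "y i = adjoint (\<alpha> i) x" for i
  define qy where "qy i = q (y i)" for i
  have qy0: "qy i \<ge> 0" for i by (simp add: qy_def q0)
  have smq: "qy summable_on UNIV"
    by (rule nonneg_bdd_above_summable_on)
       (use key[of _ x] qy0 in \<open>auto intro!: bdd_aboveI[where M="C * TG * (norm x)\<^sup>2"] simp: qy_def y_def\<close>)
  define t where "t i = \<alpha> i (A (y i))" for i
  have smt: "t summable_on UNIV"
  proof (rule summable_cauchy)
    fix e :: real assume e: "e > 0"
    define M where "M = C * TG + 1"
    have CT: "C * TG \<ge> 0" using C0 TG0 by simp
    have M: "M > 0" "C * TG \<le> M" using CT by (auto simp: M_def)
    obtain F where F: "finite F" "\<And>G. finite G \<Longrightarrow> G \<inter> F = {} \<Longrightarrow> sum qy G < e\<^sup>2 / M"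
      using tail_small[OF smq qy0, of "e\<^sup>2 / M"] e M by auto
    show "\<exists>F. finite F \<and> (\<forall>G. finite G \<and> G \<inter> F = {} \<longrightarrow> norm (sum t G) < e)"
    proof (intro exI conjI allI impI)
      fix G assume G: "finite G \<and> G \<inter> F = {}"
      define S where "S = sum t G"
      define z where "z i = adjoint (\<alpha> i) S" for i
      have tz: "cinner S (t i) = cinner (z i) (A (y i))" for i
      proof -
        have "cinner S (t i) = cnj (cinner (t i) S)" by (rule cinner_commute)
        also have "cinner (t i) S = cinner (A (y i)) (z i)" by (simp add: t_def z_def adj)
        also have "cnj (cinner (A (y i)) (z i)) = cinner (z i) (A (y i))" by (simp add: cinner_commute[of "z i"])
        finally show ?thesis .
      qed
      have "(norm S)\<^sup>2 = Re (cinner S S)" by (simp add: cinner_self_Re)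
      also have "cinner S S = (\<Sum>i\<in>G. cinner (z i) (A (y i)))"
      proof -
        have "cinner S S = cinner S (sum t G)" unfolding S_def ..
        also have "\<dots> = (\<Sum>i\<in>G. cinner S (t i))" by (rule cinner_sum_right)
        also have "\<dots> = (\<Sum>i\<in>G. cinner (z i) (A (y i)))" by (simp only: tz)
        finally show ?thesis .
      qed
      also have "Re (\<Sum>i\<in>G. cinner (z i) (A (y i))) \<le> (\<Sum>i\<in>G. cmod (cinner (z i) (A (y i))))"
        by (simp add: Re_sum sum_mono complex_Re_le_cmod)
      finally have n1: "(norm S)\<^sup>2 \<le> (\<Sum>i\<in>G. cmod (cinner (z i) (A (y i))))" .
      have "(\<Sum>i\<in>G. cmod (cinner (z i) (A (y i))))\<^sup>2 \<le> (\<Sum>i\<in>G. q (z i)) * (\<Sum>i\<in>G. qy i)"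
      proof (rule sum_sqrt_CS)
        fix i show "(cmod (cinner (z i) (A (y i))))\<^sup>2 \<le> q (z i) * qy i"
          using sA.s_CS[of "z i" "y i"] by (simp add: q_def qy_def)
      qed (auto simp: q0 qy0)
      also have "\<dots> \<le> (C * TG * (norm S)\<^sup>2) * (\<Sum>i\<in>G. qy i)"
        by (rule mult_right_mono) (use key[of G S] G in \<open>auto simp: z_def sum_nonneg qy0\<close>)
      finally have n2: "(\<Sum>i\<in>G. cmod (cinner (z i) (A (y i))))\<^sup>2 \<le> (C * TG * (norm S)\<^sup>2) * sum qy G" .
      have sq: "sum qy G < e\<^sup>2 / M" using F(2) G by blast
      have sq0: "sum qy G \<ge> 0" by (simp add: sum_nonneg qy0)
      show "norm (sum t G) < e"
      proof (cases "norm S = 0")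
        case True then show ?thesis using e S_def by simp
      next
        case False
        have "((norm S)\<^sup>2)\<^sup>2 \<le> (\<Sum>i\<in>G. cmod (cinner (z i) (A (y i))))\<^sup>2"
          using n1 by (rule power_mono) simp
        also note n2
        finally have F4: "(norm S)\<^sup>2 * (norm S)\<^sup>2 \<le> (norm S)\<^sup>2 * (C * TG * sum qy G)"
          by (simp add: power2_eq_square mult_ac)
        have "(norm S)\<^sup>2 \<le> C * TG * sum qy G"
          by (rule mult_left_le_imp_le[OF F4]) (use False in simp)
        also have "\<dots> \<le> M * sum qy G" using M(2) sq0 by (rule mult_right_mono)
        also have "\<dots> < M * (e\<^sup>2 / M)" using sq M(1) by (rule mult_strict_left_mono)
        also have "\<dots> = e\<^sup>2" using M(1) by simp
        finally have "(norm S)\<^sup>2 < e\<^sup>2" .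
        then show ?thesis using e S_def by (simp add: power_less_imp_less_base)
      qed
    qed (rule F(1))
  qed
  define P where "P = infsum t UNIV"
  have hP: "(t has_sum P) UNIV" using smt P_def by simp
  have kmx: "kraus_map \<alpha> A x = P" unfolding kraus_map_def P_def t_def y_def by simp
  define Q where "Q = infsum qy UNIV"
  have hQ: "(qy has_sum Q) UNIV" using smq Q_def by simp
  have xt: "cinner x (t i) = complex_of_real (qy i)" for i
  proof -
    have "cinner x (t i) = cnj (cinner (t i) x)" by (rule cinner_commute)
    also have "cinner (t i) x = cinner (A (y i)) (y i)" by (simp add: t_def y_def adj)
    also have "cnj (cinner (A (y i)) (y i)) = cinner (y i) (A (y i))" by (simp add: cinner_commute[of "y i"])
    also have "\<dots> = complex_of_real (qy i)" unfolding qy_def q_def by (rule sA.s_self)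
    finally show ?thesis .
  qed
  have "((\<lambda>i. cinner x (t i)) has_sum cinner x P) UNIV"
    by (rule has_sum_bounded_linear[OF bounded_linear_cinner_right hP])
  moreover have "((\<lambda>i. complex_of_real (qy i)) has_sum complex_of_real Q) UNIV"
    by (rule has_sum_of_real[OF hQ])
  ultimately have xP: "cinner x P = complex_of_real Q" unfolding xt using has_sum_unique by blast
  have "\<exists>j. qy j > 0"
  proof (rule ccontr)
    assume "\<not> ?thesis"
    then have "qy j \<le> 0" for j by (simp add: not_less)
    then have qz: "qy j = 0" for j using qy0[of j] by (meson antisym)
    have Ay: "A (y j) = 0" for j
    proof -
      have "cinner (A (y j)) (A (y j)) = 0"
        using sA.s_null'[of "y j" "A (y j)"] qz[of j] by (simp add: qy_def q_def)
      then show ?thesis by (simp add: cinner_eq_zero_iff)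
    qed
    define N where "N = {v. A v = 0}"
    have subN: "cm.subspace N"
      unfolding cm.subspace_def N_def by (simp add: bop_zero[OF bA] bop_add[OF bA] bop_scaleC[OF bA])
    have clN: "closed N"
      unfolding N_def using closed_Collect_eq[of A "\<lambda>_. 0"]
      by (simp add: linear_continuous_on bop_bounded_linear[OF bA])
    have "cspan (range y) \<subseteq> N" by (rule cm.span_minimal) (use Ay subN in \<open>auto simp: N_def\<close>)
    then have "closure (cspan (range y)) \<subseteq> N" using clN by (rule closure_minimal)
    moreover have "closure (cspan (range y)) = UNIV" using dense x unfolding y_def by blast
    ultimately have "A = (\<lambda>_. 0)" unfolding N_def by auto
    then show False using A by simp
  qed
  then obtain j where j: "qy j > 0" by blast
  have "qy j \<le> Q" unfolding Q_def
    by (rule finite_sum_le_infsum[OF smq, of "{j}", simplified]) (simp add: qy0)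
  then have "Q > 0" using j by simp
  then show "0 < Re (cinner x (kraus_map \<alpha> A x)) \<and> Im (cinner x (kraus_map \<alpha> A x)) = 0"
    by (simp add: kmx xP)
qed

theorem lemma3p3:
  fixes \<alpha> :: "nat \<Rightarrow> 'a::chilbert_space \<Rightarrow> 'a"
  assumes "separable_space TYPE('a)"
    and "kraus_family \<alpha>"
  shows "positivity_improving (kraus_map \<alpha>) \<longleftrightarrow>
         (\<forall>x::'a. x \<noteq> 0 \<longrightarrow> closure (cspan (range (\<lambda>i. adjoint (\<alpha> i) x))) = UNIV)"
  using improving_imp_dense[OF assms(2)] dense_imp_improving[OF assms] by blast

end
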